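(* Let $n$ be primover to base $2$. Then $2^n-1$ is primover to base $2$ if and only if $n$ is prime.
   Context: For an integer $a>1$ and an odd integer $n>1$ with $\gcd(a,n)=1$: $h_a(n)$ denotes the multiplicative order of $a$ modulo $n$. A cyclotomic coset of $a$ modulo $n$ is a set of the form $\{\, s a^j \bmod n : j\ge 0\,\}$ with $s\in\{1,\dots,n-1\}$; these cosets partition $\{1,\dots,n-1\}$, and $r_a(n)$ denotes the number of distinct cyclotomic cosets of $a$ modulo $n$. An odd composite number $n$ coprime to $a$ is called an overpseudoprime to base $a$ if $n=r_a(n)\,h_a(n)+1$. An integer $N>1$ is called primover to base $a$ if it is either prime or an overpseudoprime to base $a$. *)

theory Defs
  imports "HOL-Number_Theory.Number_Theory"
begin

definition h_ord :: "nat \<Rightarrow> nat \<Rightarrow> nat" where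
  "h_ord a n = ord n a"

definition cyc_coset :: "nat \<Rightarrow> nat \<Rightarrow> nat \<Rightarrow> nat set" where
  "cyc_coset a n s = {(s * a ^ j) mod n | j. True}"

definition r_cos :: "nat \<Rightarrow> nat \<Rightarrow> nat" where
  "r_cos a n = card (cyc_coset a n ` {1..n-1})"

definition overpseudoprime :: "nat \<Rightarrow> nat \<Rightarrow> bool" where
  "overpseudoprime a n \<longleftrightarrow> odd n \<and> n > 1 \<and> \<not> prime n \<and> coprime a n \<and>
     n = r_cos a n * h_ord a n + 1"

definition primover :: "nat \<Rightarrow> nat \<Rightarrow> bool" where
  "primover a N \<longleftrightarrow> N > 1 \<and> (prime N \<or> overpseudoprime a N)"

end

theory Submission
  imports Defs
begin

lemma cos_period:
  fixes s b p M q r :: nat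
  assumes "[s * b ^ p = s] (mod M)"
  shows "[s * b ^ (p * q + r) = s * b ^ r] (mod M)"
proof (induction q)
  case 0 then show ?case by simp
next
  case (Suc q)
  have e: "s * b ^ (p * Suc q + r) = (s * b ^ p) * b ^ (p*q + r)"
    by (simp add: power_add power_mult algebra_simps)
  have "[(s * b ^ p) * b ^ (p*q + r) = s * b ^ (p*q+r)] (mod M)"
    using assms by (intro cong_mult cong_refl)
  then show ?case using Suc e by (metis cong_trans)
qed

lemma cos_sub_image:
  assumes "[s * b ^ p = s] (mod M)" "p > 0"
  shows "cyc_coset b M s \<subseteq> (\<lambda>j. s * b ^ j mod M) ` {..<p}"
proof
  fix x assume "x \<in> cyc_coset b M s"
  then obtain j where x: "x = s * b ^ j mod M" by (auto simp: cyc_coset_def)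
  have "j = p * (j div p) + j mod p" by simp
  then have "[s * b ^ j = s * b ^ (j mod p)] (mod M)"
    using cos_period[OF assms(1), of "j div p" "j mod p"] by metis
  then have "x = s * b ^ (j mod p) mod M" using x by (simp add: cong_def)
  moreover have "j mod p < p" using assms(2) by simp
  ultimately show "x \<in> (\<lambda>j. s * b ^ j mod M) ` {..<p}" by blast
qed

lemma cos_card_le:
  assumes "[s * b ^ p = s] (mod M)" "p > 0"
  shows "card (cyc_coset b M s) \<le> p"
proof -
  have "card (cyc_coset b M s) \<le> card ((\<lambda>j. s * b ^ j mod M) ` {..<p})"
    by (intro card_mono cos_sub_image assms) auto
  also have "\<dots> \<le> p" using card_image_le[of "{..<p}"] by simp
  finally show ?thesis .
qed

lemma cos_finite:
  assumes "M > 0" shows "finite (cyc_coset b M s)"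
proof -
  have "cyc_coset b M s \<subseteq> {..<M}" using assms by (auto simp: cyc_coset_def)
  then show ?thesis using finite_subset by blast
qed

lemma cos_ord_period:
  fixes s b M :: nat
  assumes "coprime b M"
  shows "[s * b ^ ord M b = s] (mod M)"
proof -
  have "[b ^ ord M b = 1] (mod M)" by (rule conjunct1[OF ord_works])
  then have "[s * b ^ ord M b = s * 1] (mod M)" by (intro cong_mult cong_refl)
  then show ?thesis by simp
qed

lemma cos_sub:
  assumes "coprime b M" "s \<in> {1..M-1}"
  shows "cyc_coset b M s \<subseteq> {1..M-1}"
proof
  fix x assume "x \<in> cyc_coset b M s"
  then obtain j where x: "x = s * b ^ j mod M" by (auto simp: cyc_coset_def)
  have M0: "M > 1" using assms(2) by auto
  have "\<not> M dvd s * b ^ j"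
  proof
    assume "M dvd s * b ^ j"
    moreover have "coprime M (b ^ j)" using assms(1) by (simp add: coprime_commute)
    ultimately have "M dvd s" using coprime_dvd_mult_left_iff by blast
    then show False using assms(2) by (auto dest: dvd_imp_le)
  qed
  then have "x \<noteq> 0" using x by (simp add: dvd_eq_mod_eq_0)
  moreover have "x < M" using x M0 by simp
  ultimately show "x \<in> {1..M-1}" by auto
qed

lemma cos_self:
  assumes "s < M" shows "s \<in> cyc_coset b M s"
  unfolding cyc_coset_def using assms by (auto intro: exI[of _ 0])

lemma cos_same:
  assumes "coprime b M" "M > 1" "t \<in> cyc_coset b M s"
  shows "cyc_coset b M t = cyc_coset b M s"
proof -
  obtain j where t: "t = s * b ^ j mod M" using assms(3) by (auto simp: cyc_coset_def)
  define h where "h = ord M b"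
  have h0: "h > 0" using assms(1) by (simp add: h_def coprime_commute)
  have hb: "[b ^ h = 1] (mod M)" unfolding h_def by (rule conjunct1[OF ord_works])
  show ?thesis
  proof
    show "cyc_coset b M t \<subseteq> cyc_coset b M s"
    proof
      fix x assume "x \<in> cyc_coset b M t"
      then obtain k where x: "x = t * b ^ k mod M" by (auto simp: cyc_coset_def)
      have "x = s * b ^ (j + k) mod M" using x t
        by (metis mod_mult_left_eq power_add mult.assoc)
      then show "x \<in> cyc_coset b M s" by (auto simp: cyc_coset_def)
    qed
  next
    show "cyc_coset b M s \<subseteq> cyc_coset b M t"
    proof
      fix x assume "x \<in> cyc_coset b M s"
      then obtain k where x: "x = s * b ^ k mod M" by (auto simp: cyc_coset_def)
      define e where "e = k + h * j - j"
      have hj: "h * j \<ge> j" using h0 by simp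
      have c: "[s * b ^ (k + h * j) = s * b ^ k] (mod M)"
      proof -
        have "[(b ^ h) ^ j = 1 ^ j] (mod M)" using hb by (intro cong_pow)
        then have "[s * b ^ k * (b ^ h) ^ j = s * b ^ k * 1] (mod M)"
          by (intro cong_mult cong_refl) simp
        then show ?thesis by (simp add: power_add power_mult algebra_simps)
      qed
      have "t * b ^ e mod M = s * b ^ (j + e) mod M" using t
        by (metis mod_mult_left_eq power_add mult.assoc)
      also have "j + e = k + h * j" using hj unfolding e_def by arith
      also have "s * b ^ (k + h * j) mod M = x" using c x by (simp add: cong_def)
      finally show "x \<in> cyc_coset b M t" by (auto simp: cyc_coset_def)
    qed
  qed
qed

lemma cos_sum:
  assumes "coprime b M" "M > 1"
  shows "M - 1 = sum card (cyc_coset b M ` {1..M-1})"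
proof -
  let ?C = "cyc_coset b M ` {1..M-1}"
  have U: "\<Union> ?C = {1..M-1}"
  proof
    show "\<Union> ?C \<subseteq> {1..M-1}" using cos_sub[OF assms(1)] by blast
    show "{1..M-1} \<subseteq> \<Union> ?C"
    proof
      fix x assume x: "x \<in> {1..M-1}"
      then have "x \<in> cyc_coset b M x" using assms(2) by (intro cos_self) auto
      then show "x \<in> \<Union> ?C" using x by blast
    qed
  qed
  have D: "pairwise disjnt ?C"
  proof (rule pairwiseI)
    fix A B assume A: "A \<in> ?C" and B: "B \<in> ?C" and AB: "A \<noteq> B"
    obtain s where s: "A = cyc_coset b M s" using A by blast
    obtain t where t: "B = cyc_coset b M t" using B by blast
    show "disjnt A B" unfolding disjnt_def
    proof (rule ccontr)
      assume "A \<inter> B \<noteq> {}"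
      then obtain x where x1: "x \<in> cyc_coset b M s" and x2: "x \<in> cyc_coset b M t" using s t by blast
      have "cyc_coset b M x = cyc_coset b M s" using cos_same[OF assms(1,2) x1] .
      moreover have "cyc_coset b M x = cyc_coset b M t" using cos_same[OF assms(1,2) x2] .
      ultimately show False using AB s t by simp
    qed
  qed
  have "card (\<Union> ?C) = sum card ?C"
    by (rule card_Union_disjoint[OF D]) (use cos_finite assms in auto)
  then show ?thesis using U by simp
qed


lemma mers_basic:
  fixes n M :: nat
  assumes "n \<ge> 2" "M = 2 ^ n - 1"
  shows "M > 1" "odd M" "coprime 2 M" "[2 ^ n = 1] (mod M)" "(2::nat) ^ n = M + 1"
proof -
  have "(2::nat) ^ n \<ge> 2 ^ 2" using assms(1) by (intro power_increasing) auto
  then show "M > 1" using assms(2) by simp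
  show e: "(2::nat) ^ n = M + 1" using assms \<open>(2::nat) ^ n \<ge> 2 ^ 2\<close> by simp
  have "even ((2::nat) ^ n)" using assms(1) by simp
  then show "odd M" using e by simp
  then show "coprime 2 M" by simp
  have "(M + 1) mod M = 1 mod M" by (metis mod_add_self1 add.commute)
  then show "[2 ^ n = 1] (mod M)" using e \<open>M > 1\<close> by (simp add: cong_def)
qed

lemma ord_mers:
  fixes n M :: nat
  assumes "n \<ge> 2" "M = 2 ^ n - 1"
  shows "ord M 2 = n"
proof -
  note B = mers_basic[OF assms]
  have d: "ord M 2 dvd n" using B(4) ord_divides by blast
  have p: "ord M 2 > 0" using B(3) by (simp add: coprime_commute)
  have le: "ord M 2 \<le> n" using d assms(1) by (simp add: dvd_imp_le)
  show ?thesis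
  proof (rule ccontr)
    assume "ord M 2 \<noteq> n"
    then have lt: "ord M 2 < n" using le by simp
    have "(2::nat) ^ ord M 2 \<le> 2 ^ (n - 1)" using lt by (intro power_increasing) auto
    moreover have "(2::nat) ^ n = 2 * 2 ^ (n - 1)" using assms(1)
      by (metis Suc_diff_1 less_le_trans pos2 power_Suc zero_less_numeral)
    moreover have "(2::nat) ^ (n - 1) \<ge> 2"
      using assms(1) power_increasing[of 1 "n - 1" "2::nat"] by simp
    ultimately have lt2: "(2::nat) ^ ord M 2 < M" using B(5) by linarith
    have "[2 ^ ord M 2 = 1] (mod M)" by (rule conjunct1[OF ord_works])
    then have "(2::nat) ^ ord M 2 = 1" using lt2 B(1) by (simp add: cong_def)
    then show False using p by simp
  qed
qed

lemma key_prime: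
  fixes n M s d :: nat
  assumes "prime n" "M = 2 ^ n - 1" "0 < s" "s < M" "0 < d" "d < n"
    "[s * 2 ^ d = s] (mod M)"
  shows False
proof -
  have n2: "n \<ge> 2" using assms(1) prime_ge_2_nat by blast
  note B = mers_basic[OF n2 assms(2)]
  define g where "g = gcd s M"
  have g0: "g > 0" using assms(3) by (simp add: g_def)
  obtain s' where s': "s = g * s'" unfolding g_def by (metis gcd_dvd1 dvdE)
  obtain M' where M': "M = g * M'" unfolding g_def by (metis gcd_dvd2 dvdE)
  have "gcd s M = g" by (simp add: g_def)
  then have "gcd (g * s') (g * M') = g" using s' M' by (simp only:)
  then have "g * gcd s' M' = g" by (simp only: gcd_mult_distrib_nat)
  then have "gcd s' M' = 1" using g0 by simp
  then have cop: "coprime s' M'" by (metis coprime_iff_gcd_eq_1)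
  have gle: "g \<le> s" using assms(3) unfolding g_def by (intro gcd_le1_nat) simp
  have M'1: "M' > 1"
  proof (rule ccontr)
    assume "\<not> M' > 1"
    moreover have "M' \<noteq> 0" using M' B(1) by (cases "M' = 0") auto
    ultimately have "M' = 1" by simp
    then show False using M' gle assms(4) by simp
  qed
  have "M dvd s * 2 ^ d - s" using assms(7) by (simp add: cong_altdef_nat)
  moreover have "s * 2 ^ d - s = s * (2 ^ d - 1)" by (simp add: diff_mult_distrib2)
  ultimately have "g * M' dvd g * (s' * (2 ^ d - 1))" using s' M' by (simp add: mult.assoc)
  then have "M' dvd s' * (2 ^ d - 1)" using g0 by simp
  then have "M' dvd 2 ^ d - 1" using cop
    by (metis coprime_commute coprime_dvd_mult_right_iff)
  then have c1: "[2 ^ d = 1] (mod M')" by (simp add: cong_altdef_nat)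
  have "M' dvd M" using M' by simp
  then have c2: "[2 ^ n = 1] (mod M')" using B(4) cong_dvd_modulus_nat by blast
  have o1: "ord M' 2 dvd d" using c1 ord_divides by blast
  have o2: "ord M' 2 dvd n" using c2 ord_divides by blast
  have "ord M' 2 = 1 \<or> ord M' 2 = n" using o2 assms(1) prime_nat_iff by blast
  moreover have "ord M' 2 \<le> d" using o1 assms(5) by (simp add: dvd_imp_le)
  ultimately have "ord M' 2 = 1" using assms(6) by auto
  then have "[2 = 1] (mod M')" using ord_eq_Suc_0_iff by simp
  then have "M' dvd 1" by (simp add: cong_altdef_nat)
  then show False using M'1 by simp
qed

lemma card_prime:
  fixes n M s :: nat
  assumes "prime n" "M = 2 ^ n - 1" "s \<in> {1..M-1}"
  shows "card (cyc_coset 2 M s) = n"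
proof -
  have n2: "n \<ge> 2" using assms(1) prime_ge_2_nat by blast
  note B = mers_basic[OF n2 assms(2)]
  have o: "ord M 2 = n" using ord_mers[OF n2 assms(2)] .
  have le: "card (cyc_coset 2 M s) \<le> n"
    using cos_card_le[OF cos_ord_period[OF B(3)]] o n2 by simp
  have inj: "inj_on (\<lambda>j. s * 2 ^ j mod M) {..<n}"
  proof -
    have *: False if ij: "i < j" "j < n" and eq: "s * 2 ^ i mod M = s * 2 ^ j mod M" for i j
    proof -
      have "[s * 2 ^ (j - i) * 2 ^ i = s * 2 ^ i] (mod M)"
        using eq ij by (simp add: cong_def power_add[symmetric] mult.assoc)
      moreover have "coprime ((2::nat) ^ i) M" using B(3) by simp
      ultimately have "[s * 2 ^ (j - i) = s] (mod M)"
        using cong_mult_rcancel_nat[of "2^i" M "s * 2 ^ (j - i)" s] by simp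
      moreover have "s < M" "0 < s" using assms(3) by auto
      moreover have "j - i < n" "0 < j - i" using ij by auto
      ultimately show False using key_prime[OF assms(1,2), of s "j - i"] by blast
    qed
    show ?thesis
    proof (rule inj_onI)
      fix i j assume i: "i \<in> {..<n}" and j: "j \<in> {..<n}"
        and eq: "s * 2 ^ i mod M = s * 2 ^ j mod M"
      show "i = j"
      proof (rule ccontr)
        assume "i \<noteq> j"
        then consider "i < j" | "j < i" by linarith
        then show False
        proof cases
          case 1 then show False using *[of i j] j eq by simp
        next
          case 2 then show False using *[of j i] i eq by simp
        qed
      qed
    qed
  qed
  have "(\<lambda>j. s * 2 ^ j mod M) ` {..<n} \<subseteq> cyc_coset 2 M s"
    by (auto simp: cyc_coset_def)
  then have "card ((\<lambda>j. s * 2 ^ j mod M) ` {..<n}) \<le> card (cyc_coset 2 M s)"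
    using cos_finite B(1) by (intro card_mono) auto
  then have "n \<le> card (cyc_coset 2 M s)" using card_image[OF inj] by simp
  then show ?thesis using le by simp
qed


lemma comp_case:
  fixes n M :: nat
  assumes "n \<ge> 2" "\<not> prime n" "M = 2 ^ n - 1"
  shows "\<not> prime M" "M - 1 < r_cos 2 M * n"
proof -
  note B = mers_basic[OF assms(1,3)]
  obtain a where a: "a dvd n" "a \<noteq> 1" "a \<noteq> n"
    using assms(1,2) prime_nat_iff by auto
  have a0: "a > 0" using a(1) assms(1) by (cases "a = 0") auto
  have "a \<le> n" using a(1) assms(1) by (simp add: dvd_imp_le)
  then have an: "a < n" using a(3) by simp
  have a2: "a \<ge> 2" using a0 a(2) by simp
  obtain c where c: "n = a * c" using a(1) by (auto elim: dvdE)
  define D :: nat where "D = 2 ^ a - 1"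
  have D3: "(2::nat) ^ a \<ge> 2 ^ 2" using a2 by (intro power_increasing) auto
  then have DD: "(2::nat) ^ a = D + 1" "D \<ge> 3" by (auto simp: D_def)
  have "[2 ^ a = 1] (mod D)"
  proof -
    have "(D + 1) mod D = 1 mod D" by (metis mod_add_self1 add.commute)
    then show ?thesis using DD by (simp add: cong_def)
  qed
  then have "[(2 ^ a) ^ c = 1 ^ c] (mod D)" by (intro cong_pow)
  then have "[2 ^ n = 1] (mod D)" unfolding c by (simp only: power_mult power_one)
  then have "D dvd 2 ^ n - 1" by (simp add: cong_altdef_nat)
  then have dvd: "D dvd M" using assms(3) by (simp only:)
  have DM: "D < M"
  proof -
    have "(2::nat) ^ a < 2 ^ n" using an by (intro power_strict_increasing) auto
    then show ?thesis using DD B(5) by simp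
  qed
  show "\<not> prime M"
  proof
    assume "prime M"
    then have "D = 1 \<or> D = M" using dvd prime_nat_iff by blast
    then show False using DD DM by simp
  qed
  define s where "s = M div D"
  have sD: "s * D = M" using dvd by (simp add: s_def)
  have s0: "s > 0" using sD B(1) by (cases "s = 0") auto
  have "s * 1 < s * D" using s0 DD by simp
  then have sM: "s < M" using sD by simp
  have "s * 2 ^ a = M + s" using sD DD by (simp add: algebra_simps)
  then have per: "[s * 2 ^ a = s] (mod M)" by (simp add: cong_def)
  have cs: "card (cyc_coset 2 M s) < n" using cos_card_le[OF per a0] an by simp
  have o: "ord M 2 = n" using ord_mers[OF assms(1,3)] .
  let ?C = "cyc_coset 2 M ` {1..M-1}"
  have "M - 1 = sum card ?C" using cos_sum[OF B(3) B(1)] .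
  also have "\<dots> < sum (\<lambda>_. n) ?C"
  proof (rule sum_strict_mono_ex1)
    show "finite ?C" by simp
    show "\<forall>x\<in>?C. card x \<le> n"
      using cos_card_le[OF cos_ord_period[OF B(3)]] o assms(1) by auto
    show "\<exists>x\<in>?C. card x < n" using cs s0 sM by auto
  qed
  also have "\<dots> = r_cos 2 M * n" by (simp add: r_cos_def)
  finally show "M - 1 < r_cos 2 M * n" .
qed

lemma prime_case:
  fixes n M :: nat
  assumes "prime n" "M = 2 ^ n - 1"
  shows "primover 2 M"
proof -
  have n2: "n \<ge> 2" using assms(1) prime_ge_2_nat by blast
  note B = mers_basic[OF n2 assms(2)]
  let ?C = "cyc_coset 2 M ` {1..M-1}"
  have "M - 1 = sum card ?C" using cos_sum[OF B(3) B(1)] .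
  also have "\<dots> = sum (\<lambda>_. n) ?C"
    by (rule sum.cong) (use card_prime[OF assms] in auto)
  also have "\<dots> = r_cos 2 M * n" by (simp add: r_cos_def)
  finally have eq: "M = r_cos 2 M * h_ord 2 M + 1"
    using B(1) ord_mers[OF n2 assms(2)] by (simp add: h_ord_def)
  show ?thesis using B eq unfolding primover_def overpseudoprime_def by auto
qed

theorem theorem3:
  fixes n :: nat
  assumes "primover 2 n"
  shows "primover 2 (2 ^ n - 1) \<longleftrightarrow> prime n"
proof
  assume "prime n" then show "primover 2 (2 ^ n - 1)" using prime_case by blast
next
  assume P: "primover 2 (2 ^ n - 1)"
  show "prime n"
  proof (rule ccontr)
    assume np: "\<not> prime n"
    have n2: "n \<ge> 2" using assms by (simp add: primover_def)
    note C = comp_case[OF n2 np refl]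
    have "overpseudoprime 2 (2 ^ n - 1)" using P C(1) by (simp add: primover_def)
    then have "2 ^ n - 1 = r_cos 2 (2 ^ n - 1) * n + (1::nat)"
      using ord_mers[OF n2 refl] by (simp add: overpseudoprime_def h_ord_def)
    then show False using C(2) by linarith
  qed
qed

end
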